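(* Let $\mathcal{X}$ be a connected $n$-premaniplex with base flag $x_0$ and $N=\operatorname{Stab}_{\mathcal{C}^n}(x_0)$, and let $(\mathcal{Y},\eta)$ be an $(n,m)$-voltage operator that preserves connectivity, with base flag $y_0$ of $\mathcal{Y}$, $L=\operatorname{Stab}_{\mathcal{C}^m}(y_0)$ and $\zeta:L\to\mathcal{C}^n$, $\zeta(\omega)=\eta(W_\omega(y_0))$. For $\upsilon\in\mathcal{C}^m$ let $\mathcal{Z}_\upsilon=\mathcal{C}^n/\zeta(L\cap L^\upsilon)$. If for every $\upsilon\in\mathcal{C}^m\setminus L$ the premaniplex $\mathcal{X}$ does not cover $\mathcal{Z}_\upsilon$, then every automorphism $\gamma$ of $\mathcal{X}\rtimes_\eta\mathcal{Y}$ is induced by an automorphism of $\mathcal{X}$, i.e. there is $\alpha\in\operatorname{Aut}(\mathcal{X})$ with $(x,y)\gamma=(x\alpha,y)$ for all $(x,y)$.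
   Context: An $n$-premaniplex is an edge-coloured graph (semi-edges and parallel edges allowed) with colours $\{0,\dots,n-1\}$ such that every vertex (flag) is the start of exactly one dart of each colour, and for $|i-j|\ge2$ alternating $i,j$-paths of length 4 are closed; $x^i$ is the $i$-adjacent flag of $x$. $\mathcal{C}^n=\langle r_0,\dots,r_{n-1}\mid r_i^2,\ (r_ir_j)^2\ (|i-j|\ge2)\rangle$ acts on the left on flags by $r_ix=x^i$; automorphisms act on the right. A covering is a surjective map of flags preserving all adjacencies. $L^\upsilon=\upsilon^{-1}L\upsilon$. For a subgroup $K\le\mathcal{C}^n$, $\mathcal{C}^n/K$ has flags the left cosets $\omega K$ with $(\omega K)^i=r_i\omega K$. For a flag $y$ of an $m$-premaniplex $\mathcal{Y}$ and $\omega\in\mathcal{C}^m$, $W_\omega(y)$ is the homotopy class of paths from $y$ whose colour sequence $i_1,\dots,i_k$ satisfies $r_{i_k}\cdots r_{i_1}=\omega$; these form the fundamental groupoid $\Pi(\mathcal{Y})$. A voltage assignment $\eta:\Pi(\mathcal{Y})\to\mathcal{C}^n$ satisfies $\eta(W_1W_2)=\eta(W_2)\eta(W_1)$; $(\mathcal{Y},\eta)$ is an $(n,m)$-voltage operator. $\mathcal{X}\rtimes_\eta\mathcal{Y}$ has flags $\mathcal{X}\times\mathcal{Y}$ and $(x,y)^i=(\eta(W_{r_i}(y))x,r_iy)$, $i\in\{0,\dots,m-1\}$. The operator preserves connectivity if $\mathcal{X}\rtimes_\eta\mathcal{Y}$ is connected whenever $\mathcal{X}$ is. Standing convention: $\mathcal{Y}$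 has a spanning tree all of whose darts have trivial voltage. *)

theory Defs
  imports Main
begin

text \<open>Words over the generators. A word [a1,...,ak] represents the element
  r_a1 r_a2 ... r_ak of the group C^n; its inverse is represented by the reversed word.\<close>

type_synonym word = "nat list"

definition words :: "nat \<Rightarrow> word set" where
  "words n = {w. set w \<subseteq> {..<n}}"

text \<open>Equality in C^n = < r_0..r_(n-1) | r_i^2, (r_i r_j)^2 for |i-j| >= 2 >.\<close>
inductive cox_eq :: "nat \<Rightarrow> word \<Rightarrow> word \<Rightarrow> bool" for n :: nat where
  cox_refl: "set w \<subseteq> {..<n} \<Longrightarrow> cox_eq n w w"
| cox_sym: "cox_eq n u v \<Longrightarrow> cox_eq n v u"
| cox_trans: "cox_eq n u v \<Longrightarrow> cox_eq n v w \<Longrightarrow> cox_eq n u w"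
| cox_del2: "set u \<subseteq> {..<n} \<Longrightarrow> set v \<subseteq> {..<n} \<Longrightarrow> i < n \<Longrightarrow>
      cox_eq n (u @ [i, i] @ v) (u @ v)"
| cox_del4: "set u \<subseteq> {..<n} \<Longrightarrow> set v \<subseteq> {..<n} \<Longrightarrow> i < n \<Longrightarrow> j < n \<Longrightarrow>
      i + 2 \<le> j \<or> j + 2 \<le> i \<Longrightarrow> cox_eq n (u @ [i, j, i, j] @ v) (u @ v)"

text \<open>Left action of a word on flags: (r_a1 ... r_ak) x = r_a1 (... (r_ak x)), r_i x = x^i.\<close>
definition act :: "(nat \<Rightarrow> 'a \<Rightarrow> 'a) \<Rightarrow> word \<Rightarrow> 'a \<Rightarrow> 'a" where
  "act adj w x = foldr adj w x"

definition premaniplex :: "nat \<Rightarrow> 'a set \<Rightarrow> (nat \<Rightarrow> 'a \<Rightarrow> 'a) \<Rightarrow> bool" where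
  "premaniplex n F adj \<longleftrightarrow>
     (\<forall>i<n. \<forall>x\<in>F. adj i x \<in> F \<and> adj i (adj i x) = x) \<and>
     (\<forall>i<n. \<forall>j<n. i + 2 \<le> j \<or> j + 2 \<le> i \<longrightarrow>
        (\<forall>x\<in>F. adj j (adj i (adj j (adj i x))) = x))"

definition connected_pm :: "nat \<Rightarrow> 'a set \<Rightarrow> (nat \<Rightarrow> 'a \<Rightarrow> 'a) \<Rightarrow> bool" where
  "connected_pm n F adj \<longleftrightarrow> (\<forall>x\<in>F. \<forall>y\<in>F. \<exists>w\<in>words n. act adj w x = y)"

definition stab :: "nat \<Rightarrow> (nat \<Rightarrow> 'a \<Rightarrow> 'a) \<Rightarrow> 'a \<Rightarrow> word set" where
  "stab n adj x = {w \<in> words n. act adj w x = x}"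

text \<open>Automorphisms (acting on the right): (x^i) alpha = (x alpha)^i.\<close>
definition automorphism :: "nat \<Rightarrow> 'a set \<Rightarrow> (nat \<Rightarrow> 'a \<Rightarrow> 'a) \<Rightarrow> ('a \<Rightarrow> 'a) \<Rightarrow> bool" where
  "automorphism n F adj \<alpha> \<longleftrightarrow> bij_betw \<alpha> F F \<and> (\<forall>i<n. \<forall>x\<in>F. \<alpha> (adj i x) = adj i (\<alpha> x))"

definition covers :: "nat \<Rightarrow> 'a set \<Rightarrow> (nat \<Rightarrow> 'a \<Rightarrow> 'a) \<Rightarrow> 'b set \<Rightarrow> (nat \<Rightarrow> 'b \<Rightarrow> 'b) \<Rightarrow> bool" where
  "covers n F adj G adj' \<longleftrightarrow>
     (\<exists>f. f ` F = G \<and> (\<forall>i<n. \<forall>x\<in>F. f (adj i x) = adj' i (f x)))"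

text \<open>The premaniplex C^n/K: flags are the left cosets wK, with (wK)^i = r_i w K.\<close>
definition coset :: "nat \<Rightarrow> word set \<Rightarrow> word \<Rightarrow> word set" where
  "coset n K w = {w' \<in> words n. \<exists>k\<in>K. cox_eq n w' (w @ k)}"

definition quot_flags :: "nat \<Rightarrow> word set \<Rightarrow> word set set" where
  "quot_flags n K = coset n K ` words n"

definition quot_adj :: "nat \<Rightarrow> nat \<Rightarrow> word set \<Rightarrow> word set" where
  "quot_adj n i C = {w' \<in> words n. \<exists>w\<in>C. cox_eq n w' (i # w)}"

text \<open>Voltage assignment on the fundamental groupoid: the homotopy class W_omega(y) is
  identified with the pair (y, omega), omega in C^m; eta y omega = eta(W_omega(y)) in C^n.\<close>
definition voltage :: "nat \<Rightarrow> nat \<Rightarrow> 'b set \<Rightarrow> (nat \<Rightarrow> 'b \<Rightarrow> 'b) \<Rightarrow> ('b \<Rightarrow> word \<Rightarrow> word) \<Rightarrow> bool" where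
  "voltage n m FY adjY eta \<longleftrightarrow>
     (\<forall>y\<in>FY. \<forall>\<omega>\<in>words m. eta y \<omega> \<in> words n) \<and>
     (\<forall>y\<in>FY. \<forall>\<omega> \<omega>'. cox_eq m \<omega> \<omega>' \<longrightarrow> cox_eq n (eta y \<omega>) (eta y \<omega>')) \<and>
     (\<forall>y\<in>FY. \<forall>\<omega>\<in>words m. \<forall>\<omega>'\<in>words m.
        cox_eq n (eta y (\<omega>' @ \<omega>)) (eta (act adjY \<omega> y) \<omega>' @ eta y \<omega>))"

definition voltage_operator :: "nat \<Rightarrow> nat \<Rightarrow> 'b set \<Rightarrow> (nat \<Rightarrow> 'b \<Rightarrow> 'b) \<Rightarrow> ('b \<Rightarrow> word \<Rightarrow> word) \<Rightarrow> bool" where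
  "voltage_operator n m FY adjY eta \<longleftrightarrow> premaniplex m FY adjY \<and> voltage n m FY adjY eta"

definition prod_adj :: "(nat \<Rightarrow> 'a \<Rightarrow> 'a) \<Rightarrow> (nat \<Rightarrow> 'b \<Rightarrow> 'b) \<Rightarrow> ('b \<Rightarrow> word \<Rightarrow> word)
    \<Rightarrow> nat \<Rightarrow> 'a \<times> 'b \<Rightarrow> 'a \<times> 'b" where
  "prod_adj adjX adjY eta i p = (act adjX (eta (snd p) [i]) (fst p), adjY i (snd p))"

text \<open>Every connected n-premaniplex is countable (each flag is
  w x0 for a word w), hence isomorphic to one whose flags are natural numbers; so quantifying
  over premaniplexes with flags in nat covers all connected premaniplexes up to isomorphism.\<close>
definition preserves_connectivity :: "nat \<Rightarrow> nat \<Rightarrow> 'b set \<Rightarrow> (nat \<Rightarrow> 'b \<Rightarrow> 'b) \<Rightarrow> ('b \<Rightarrow> word \<Rightarrow> word) \<Rightarrow> bool" where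
  "preserves_connectivity n m FY adjY eta \<longleftrightarrow>
     (\<forall>(FX :: nat set) adjX. premaniplex n FX adjX \<and> connected_pm n FX adjX \<longrightarrow>
        connected_pm m (FX \<times> FY) (prod_adj adjX adjY eta))"

text \<open>Spanning trees. A set T of darts (y,i) (dart of colour i starting at y), closed under
  reversal; a T-path from y is given by its colour sequence in path order.\<close>
fun tpath :: "(nat \<Rightarrow> 'b \<Rightarrow> 'b) \<Rightarrow> ('b \<times> nat) set \<Rightarrow> 'b \<Rightarrow> nat list \<Rightarrow> bool" where
  "tpath adj T y [] = True"
| "tpath adj T y (i # is) = ((y, i) \<in> T \<and> tpath adj T (adj i y) is)"

definition path_end :: "(nat \<Rightarrow> 'b \<Rightarrow> 'b) \<Rightarrow> 'b \<Rightarrow> nat list \<Rightarrow> 'b" where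
  "path_end adj y is = foldl (\<lambda>z i. adj i z) y is"

definition reduced :: "nat list \<Rightarrow> bool" where
  "reduced is \<longleftrightarrow> (\<forall>j. Suc j < length is \<longrightarrow> is ! j \<noteq> is ! Suc j)"

text \<open>T spans a tree: it connects all flags and contains no cycle (no nontrivial closed
  non-backtracking walk; semi-edges and pairs of parallel edges count as cycles).\<close>
definition spanning_tree :: "nat \<Rightarrow> 'b set \<Rightarrow> (nat \<Rightarrow> 'b \<Rightarrow> 'b) \<Rightarrow> ('b \<times> nat) set \<Rightarrow> bool" where
  "spanning_tree m F adj T \<longleftrightarrow>
     T \<subseteq> F \<times> {..<m} \<and>
     (\<forall>(y, i)\<in>T. (adj i y, i) \<in> T) \<and>
     (\<forall>y\<in>F. \<forall>z\<in>F. \<exists>is. tpath adj T y is \<and> path_end adj y is = z) \<and>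
     (\<forall>y\<in>F. \<forall>is. is \<noteq> [] \<and> reduced is \<and> tpath adj T y is \<longrightarrow> path_end adj y is \<noteq> y)"

definition trivial_tree_convention :: "nat \<Rightarrow> nat \<Rightarrow> 'b set \<Rightarrow> (nat \<Rightarrow> 'b \<Rightarrow> 'b) \<Rightarrow> ('b \<Rightarrow> word \<Rightarrow> word) \<Rightarrow> bool" where
  "trivial_tree_convention n m FY adjY eta \<longleftrightarrow>
     (\<exists>T. spanning_tree m FY adjY T \<and> (\<forall>(y, i)\<in>T. cox_eq n (eta y [i]) []))"

end

theory Submission
  imports Defs "HOL-Library.Countable"
begin

lemma cox_words: "cox_eq n u v \<Longrightarrow> u \<in> words n \<and> v \<in> words n"
  by (induction rule: cox_eq.induct) (auto simp: words_def)

lemma cox_cong: "cox_eq n u v \<Longrightarrow> a \<in> words n \<Longrightarrow> b \<in> words n \<Longrightarrow> cox_eq n (a@u@b) (a@v@b)"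
proof (induction rule: cox_eq.induct)
  case (cox_refl w) then show ?case by (intro cox_eq.cox_refl) (auto simp: words_def)
next
  case (cox_sym u v) then show ?case by (blast intro: cox_eq.cox_sym)
next
  case (cox_trans u v w) then show ?case by (blast intro: cox_eq.cox_trans)
next
  case (cox_del2 u v i)
  then show ?case using cox_eq.cox_del2[of "a@u" n "v@b" i] by (auto simp: words_def)
next
  case (cox_del4 u v i j)
  then show ?case using cox_eq.cox_del4[of "a@u" n "v@b" i j] by (auto simp: words_def)
qed

lemma cox_cong_l: "cox_eq n u v \<Longrightarrow> a \<in> words n \<Longrightarrow> cox_eq n (a@u) (a@v)"
  using cox_cong[of n u v a "[]"] by (simp add: words_def)

lemma cox_cong_r: "cox_eq n u v \<Longrightarrow> b \<in> words n \<Longrightarrow> cox_eq n (u@b) (v@b)"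
  using cox_cong[of n u v "[]" b] by (simp add: words_def)

lemma cox_rev: "w \<in> words n \<Longrightarrow> cox_eq n (rev w @ w) []"
proof (induction w)
  case Nil then show ?case by (simp add: cox_eq.cox_refl)
next
  case (Cons a w)
  then have w: "w \<in> words n" and a: "a < n" by (auto simp: words_def)
  have "cox_eq n (rev w @ [a,a] @ w) (rev w @ w)"
    using w a by (intro cox_eq.cox_del2) (auto simp: words_def)
  then show ?case using Cons.IH[OF w] by (auto intro: cox_eq.cox_trans)
qed

lemma cox_rev2: "w \<in> words n \<Longrightarrow> cox_eq n (w @ rev w) []"
  using cox_rev[of "rev w" n] by (simp add: words_def)

lemma act_append: "act adj (u@v) x = act adj u (act adj v x)"
  by (simp add: act_def)
lemma act_Cons[simp]: "act adj (i#w) x = adj i (act adj w x)"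
  by (simp add: act_def)
lemma act_Nil[simp]: "act adj [] x = x"
  by (simp add: act_def)

lemma act_closed: "premaniplex n F adj \<Longrightarrow> x \<in> F \<Longrightarrow> w \<in> words n \<Longrightarrow> act adj w x \<in> F"
  by (induction w) (auto simp: words_def premaniplex_def)

lemma act_cox: "cox_eq n u v \<Longrightarrow> premaniplex n F adj \<Longrightarrow> x \<in> F \<Longrightarrow> act adj u x = act adj v x"
proof (induction rule: cox_eq.induct)
  case (cox_del2 u v i)
  have "act adj v x \<in> F" using cox_del2 act_closed by (auto simp: words_def)
  then show ?case using cox_del2 by (simp add: act_append premaniplex_def)
next
  case (cox_del4 u v i j)
  have "act adj v x \<in> F" using cox_del4 act_closed by (auto simp: words_def)
  then show ?case using cox_del4 unfolding premaniplex_def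
    by (simp add: act_append) metis
qed auto

lemma act_rev: "premaniplex n F adj \<Longrightarrow> x \<in> F \<Longrightarrow> w \<in> words n \<Longrightarrow> act adj (rev w) (act adj w x) = x"
  using act_cox[OF cox_rev, of w n F adj x] by (simp add: act_append)

lemma act_rev2: "premaniplex n F adj \<Longrightarrow> x \<in> F \<Longrightarrow> w \<in> words n \<Longrightarrow> act adj w (act adj (rev w) x) = x"
  using act_rev[of n F adj x "rev w"] by (simp add: words_def)

lemma eta_nil:
  assumes V: "voltage n m FY adjY eta" and y: "y \<in> FY"
  shows "cox_eq n (eta y []) []"
proof -
  define e where "e = eta y []"
  have ew: "e \<in> words n" using V y unfolding voltage_def e_def by (auto simp: words_def)
  have "cox_eq n (eta y ([] @ [])) (eta (act adjY [] y) [] @ eta y [])"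
  proof -
    have "\<forall>y\<in>FY. \<forall>\<omega>\<in>words m. \<forall>\<omega>'\<in>words m.
        cox_eq n (eta y (\<omega>' @ \<omega>)) (eta (act adjY \<omega> y) \<omega>' @ eta y \<omega>)"
      using V unfolding voltage_def by blast
    moreover have "[] \<in> words m" by (simp add: words_def)
    ultimately show ?thesis using y by blast
  qed
  then have "cox_eq n e (e @ e)" by (simp add: e_def)
  then have 1: "cox_eq n (rev e @ e) (rev e @ e @ e)" using ew cox_cong_l[of n e "e@e" "rev e"]
    by (simp add: words_def)
  have 2: "cox_eq n (rev e @ e @ e) e" using cox_cong_r[OF cox_rev[OF ew] ew] by simp
  have "cox_eq n [] (rev e @ e)" using cox_rev[OF ew] by (rule cox_eq.cox_sym)
  then have "cox_eq n [] e" using 1 2 by (blast intro: cox_eq.cox_trans)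
  then show ?thesis unfolding e_def by (rule cox_eq.cox_sym)
qed

lemma prod_act:
  assumes X: "premaniplex n FX adjX" and Yp: "premaniplex m FY adjY"
    and V: "voltage n m FY adjY eta"
    and x: "x \<in> FX" and y: "y \<in> FY"
  shows "\<omega> \<in> words m \<Longrightarrow> act (prod_adj adjX adjY eta) \<omega> (x,y) = (act adjX (eta y \<omega>) x, act adjY \<omega> y)"
proof (induction \<omega>)
  case Nil
  show ?case using act_cox[OF eta_nil[OF V y] X x] by simp
next
  case (Cons i \<omega>)
  have w: "\<omega> \<in> words m" and i: "[i] \<in> words m" using Cons.prems by (auto simp: words_def)
  have ay: "act adjY \<omega> y \<in> FY" using act_closed[OF Yp y w] .
  have "\<forall>y\<in>FY. \<forall>\<omega>\<in>words m. \<forall>\<omega>'\<in>words m.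
        cox_eq n (eta y (\<omega>' @ \<omega>)) (eta (act adjY \<omega> y) \<omega>' @ eta y \<omega>)"
    using V unfolding voltage_def by blast
  then have c: "cox_eq n (eta y ([i] @ \<omega>)) (eta (act adjY \<omega> y) [i] @ eta y \<omega>)"
    using y w i by blast
  have "act adjX (eta y (i # \<omega>)) x = act adjX (eta (act adjY \<omega> y) [i] @ eta y \<omega>) x"
    using act_cox[OF c X x] by simp
  then show ?case using Cons.IH[OF w]
    by (simp add: prod_adj_def act_append)
qed

lemma prod_closed:
  assumes X: "premaniplex n FX adjX" and Yp: "premaniplex m FY adjY"
    and V: "voltage n m FY adjY eta"
  shows "\<forall>i<m. \<forall>p\<in>FX \<times> FY. prod_adj adjX adjY eta i p \<in> FX \<times> FY"
proof (intro allI impI ballI)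
  fix i p assume i: "i < m" and p: "p \<in> FX \<times> FY"
  have "[i] \<in> words m" using i by (simp add: words_def)
  then have "eta (snd p) [i] \<in> words n" using V p unfolding voltage_def by auto
  then show "prod_adj adjX adjY eta i p \<in> FX \<times> FY"
    using p i act_closed[OF X] Yp unfolding prod_adj_def premaniplex_def by auto
qed

lemma act_closed_gen: "\<forall>i<m. \<forall>p\<in>F. P i p \<in> F \<Longrightarrow> p \<in> F \<Longrightarrow> w \<in> words m \<Longrightarrow> act P w p \<in> F"
  by (induction w) (auto simp: words_def)

lemma aut_comm:
  assumes cl: "\<forall>i<m. \<forall>p\<in>F. P i p \<in> F" and aut: "automorphism m F P g" and p: "p \<in> F"
  shows "w \<in> words m \<Longrightarrow> g (act P w p) = act P w (g p)"
proof (induction w)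
  case (Cons i w)
  then have "w \<in> words m" "i < m" by (auto simp: words_def)
  then show ?case using Cons act_closed_gen[OF cl p] aut unfolding automorphism_def by auto
qed simp

definition cl :: "nat \<Rightarrow> word \<Rightarrow> word" where "cl n w = (SOME v. cox_eq n v w)"

lemma cl_cox: "w \<in> words n \<Longrightarrow> cox_eq n (cl n w) w"
  unfolding cl_def by (rule someI[of _ w]) (rule cox_eq.cox_refl, simp add: words_def)

lemma cl_eq: "cox_eq n u v \<Longrightarrow> cl n u = cl n v"
proof -
  assume uv: "cox_eq n u v"
  have "(\<lambda>x. cox_eq n x u) = (\<lambda>x. cox_eq n x v)"
    using uv by (auto intro: cox_eq.cox_trans cox_eq.cox_sym)
  then show ?thesis unfolding cl_def by simp
qed

lemma cl_words: "w \<in> words n \<Longrightarrow> cl n w \<in> words n"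
  using cl_cox cox_words by blast

definition UF :: "nat \<Rightarrow> nat set" where "UF n = (\<lambda>w. to_nat (cl n w)) ` words n"
definition Uadj :: "nat \<Rightarrow> nat \<Rightarrow> nat \<Rightarrow> nat" where "Uadj n i k = to_nat (cl n (i # from_nat k))"

lemma Uadj_cl: "i < n \<Longrightarrow> w \<in> words n \<Longrightarrow> Uadj n i (to_nat (cl n w)) = to_nat (cl n (i # w))"
  unfolding Uadj_def using cl_eq[OF cox_cong_l[OF cl_cox, of w n "[i]"]] by (simp add: words_def)

lemma U_pm: "premaniplex n (UF n) (Uadj n)"
  unfolding premaniplex_def
proof (intro conjI allI impI ballI)
  fix i k assume i: "i < n" and k: "k \<in> UF n"
  then obtain w where w: "w \<in> words n" and kw: "k = to_nat (cl n w)" by (auto simp: UF_def)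
  have iw: "i # w \<in> words n" using i w by (simp add: words_def)
  show "Uadj n i k \<in> UF n" using Uadj_cl[OF i w] iw kw by (auto simp: UF_def)
  have "cox_eq n ([] @ [i,i] @ w) ([] @ w)" using i w by (intro cox_eq.cox_del2) (auto simp: words_def)
  then show "Uadj n i (Uadj n i k) = k"
    using Uadj_cl[OF i w] Uadj_cl[OF i iw] kw cl_eq by simp
next
  fix i j k assume i: "i < n" and j: "j < n" and ij: "i + 2 \<le> j \<or> j + 2 \<le> i" and k: "k \<in> UF n"
  then obtain w where w: "w \<in> words n" and kw: "k = to_nat (cl n w)" by (auto simp: UF_def)
  have "cox_eq n ([] @ [j,i,j,i] @ w) ([] @ w)" using i j ij w by (intro cox_eq.cox_del4) (auto simp: words_def)
  moreover have "Uadj n j (Uadj n i (Uadj n j (Uadj n i k))) = to_nat (cl n (j#i#j#i#w))"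
    using i j w kw by (simp add: Uadj_cl words_def)
  ultimately show "Uadj n j (Uadj n i (Uadj n j (Uadj n i k))) = k"
    using kw cl_eq by simp
qed

lemma U_act: "w \<in> words n \<Longrightarrow> v \<in> words n \<Longrightarrow> act (Uadj n) v (to_nat (cl n w)) = to_nat (cl n (v @ w))"
proof (induction v)
  case (Cons i v)
  then have "v \<in> words n" "i < n" "v @ w \<in> words n" by (auto simp: words_def)
  then show ?case using Cons by (simp add: Uadj_cl)
qed simp

lemma U_conn: "connected_pm n (UF n) (Uadj n)"
  unfolding connected_pm_def
proof (intro ballI)
  fix k1 k2 assume "k1 \<in> UF n" "k2 \<in> UF n"
  then obtain w1 w2 where w: "w1 \<in> words n" "w2 \<in> words n" and
    k: "k1 = to_nat (cl n w1)" "k2 = to_nat (cl n w2)" by (auto simp: UF_def)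
  have ww: "w2 @ rev w1 \<in> words n" using w by (auto simp: words_def)
  have "cox_eq n (w2 @ (rev w1 @ w1)) (w2 @ [])" using cox_cong_l[OF cox_rev[OF w(1)] w(2)] .
  then have "act (Uadj n) (w2 @ rev w1) k1 = k2"
    using U_act[OF w(1) ww] k cl_eq by simp
  then show "\<exists>w\<in>words n. act (Uadj n) w k1 = k2" using ww by blast
qed

lemma universal:
  assumes Yp: "premaniplex m FY adjY" and V: "voltage n m FY adjY eta"
    and pres: "preserves_connectivity n m FY adjY eta" and y0: "y0 \<in> FY"
    and w: "w \<in> words n" and y: "y \<in> FY"
  shows "\<exists>\<omega>\<in>words m. act adjY \<omega> y0 = y \<and> cox_eq n (eta y0 \<omega>) w"
proof -
  have e: "[] \<in> words n" by (simp add: words_def)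
  have conn: "connected_pm m (UF n \<times> FY) (prod_adj (Uadj n) adjY eta)"
    using pres U_pm U_conn unfolding preserves_connectivity_def by blast
  have p1: "(to_nat (cl n []), y0) \<in> UF n \<times> FY" using y0 e by (auto simp: UF_def)
  have p2: "(to_nat (cl n w), y) \<in> UF n \<times> FY" using y w by (auto simp: UF_def)
  obtain \<omega> where om: "\<omega> \<in> words m" and
    eq: "act (prod_adj (Uadj n) adjY eta) \<omega> (to_nat (cl n []), y0) = (to_nat (cl n w), y)"
    using conn p1 p2 unfolding connected_pm_def by blast
  have ew: "eta y0 \<omega> \<in> words n" using V y0 om unfolding voltage_def by blast
  have "act (prod_adj (Uadj n) adjY eta) \<omega> (to_nat (cl n []), y0)
      = (to_nat (cl n (eta y0 \<omega>)), act adjY \<omega> y0)"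
    using prod_act[OF U_pm Yp V _ y0 om] p1 U_act[OF e ew] by simp
  with eq have "cl n (eta y0 \<omega>) = cl n w" "act adjY \<omega> y0 = y"
    by (auto dest: injD[OF inj_to_nat])
  then have "cox_eq n (eta y0 \<omega>) w"
    using cl_cox[OF ew] cl_cox[OF w] by (metis cox_eq.cox_sym cox_eq.cox_trans)
  then show ?thesis using om \<open>act adjY \<omega> y0 = y\<close> by blast
qed

lemma coset_adj:
  assumes i: "i < n" and w: "w \<in> words n" and K: "K \<subseteq> words n"
  shows "quot_adj n i (coset n K w) = coset n K (i # w)"
proof
  show "quot_adj n i (coset n K w) \<subseteq> coset n K (i # w)"
  proof
    fix v assume "v \<in> quot_adj n i (coset n K w)"
    then obtain u k where v: "v \<in> words n" and vu: "cox_eq n v (i # u)" and k: "k \<in> K"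
      and uk: "cox_eq n u (w @ k)" unfolding quot_adj_def coset_def by blast
    have "[i] \<in> words n" using i by (simp add: words_def)
    from cox_cong_l[OF uk this] have "cox_eq n ([i] @ u) ([i] @ (w @ k))" .
    then have "cox_eq n v ((i # w) @ k)" using vu by (auto intro: cox_eq.cox_trans)
    then show "v \<in> coset n K (i # w)" using v k unfolding coset_def by blast
  qed
next
  show "coset n K (i # w) \<subseteq> quot_adj n i (coset n K w)"
  proof
    fix v assume "v \<in> coset n K (i # w)"
    then obtain k where v: "v \<in> words n" and k: "k \<in> K" and vk: "cox_eq n v ((i # w) @ k)"
      unfolding coset_def by blast
    have wk: "w @ k \<in> words n" using w k K by (auto simp: words_def)
    then have "w @ k \<in> coset n K w" using k cox_eq.cox_refl[of "w@k" n] unfolding coset_def by (auto simp: words_def)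
    then show "v \<in> quot_adj n i (coset n K w)" using v vk unfolding quot_adj_def by auto
  qed
qed

lemma coset_sub:
  assumes X: "premaniplex n FX adjX" and x: "x \<in> FX" and K: "K \<subseteq> words n"
    and Kmul: "\<forall>a\<in>K. \<forall>b\<in>K. \<exists>c\<in>K. cox_eq n (a @ b) c"
    and Kstab: "\<forall>s\<in>words n. act adjX s x = x \<longrightarrow> (\<exists>k\<in>K. cox_eq n s k)"
    and w: "w \<in> words n" and w': "w' \<in> words n" and eq: "act adjX w x = act adjX w' x"
  shows "coset n K w \<subseteq> coset n K w'"
proof
  fix v assume "v \<in> coset n K w"
  then obtain k where v: "v \<in> words n" and k: "k \<in> K" and vk: "cox_eq n v (w @ k)"
    unfolding coset_def by blast
  have s: "rev w' @ w \<in> words n" using w w' by (auto simp: words_def)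
  have "act adjX (rev w' @ w) x = x" using eq act_rev[OF X _ w'] x by (simp add: act_append)
  then obtain k1 where k1: "k1 \<in> K" and sk1: "cox_eq n (rev w' @ w) k1" using Kstab s by blast
  obtain c where c: "c \<in> K" and kc: "cox_eq n (k1 @ k) c" using Kmul k1 k by blast
  have kw: "k \<in> words n" using k K by auto
  have 1: "cox_eq n ((w' @ rev w') @ (w @ k)) ([] @ (w @ k))"
    using cox_cong_r[OF cox_rev2[OF w']] w kw by (simp add: words_def)
  have 2: "cox_eq n (w' @ (rev w' @ w) @ k) (w' @ k1 @ k)"
    using cox_cong[OF sk1 w' kw] by simp
  have 3: "cox_eq n (w' @ (k1 @ k)) (w' @ c)" using cox_cong_l[OF kc w'] .
  have "cox_eq n v (w' @ c)" using vk 1 2 3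
    by simp (meson cox_eq.cox_sym cox_eq.cox_trans)
  then show "v \<in> coset n K w'" using v c unfolding coset_def by blast
qed

lemma cover_lemma:
  assumes X: "premaniplex n FX adjX" and Xc: "connected_pm n FX adjX" and x: "x \<in> FX"
    and K: "K \<subseteq> words n"
    and Kmul: "\<forall>a\<in>K. \<forall>b\<in>K. \<exists>c\<in>K. cox_eq n (a @ b) c"
    and Kstab: "\<forall>s\<in>words n. act adjX s x = x \<longrightarrow> (\<exists>k\<in>K. cox_eq n s k)"
  shows "covers n FX adjX (quot_flags n K) (quot_adj n)"
proof -
  have ceq: "coset n K w = coset n K w'" if "w \<in> words n" "w' \<in> words n" "act adjX w x = act adjX w' x" for w w'
    using coset_sub[OF X x K Kmul Kstab] that by (metis subset_antisym)
  define r where "r z = (SOME w. w \<in> words n \<and> act adjX w x = z)" for z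
  have r: "r z \<in> words n \<and> act adjX (r z) x = z" if "z \<in> FX" for z
  proof -
    have "\<exists>w. w \<in> words n \<and> act adjX w x = z" using Xc x that unfolding connected_pm_def by blast
    then show ?thesis unfolding r_def by (rule someI_ex)
  qed
  define f where "f z = coset n K (r z)" for z
  have "f ` FX = quot_flags n K"
  proof
    show "f ` FX \<subseteq> quot_flags n K" using r unfolding f_def quot_flags_def by auto
  next
    show "quot_flags n K \<subseteq> f ` FX"
    proof
      fix C assume "C \<in> quot_flags n K"
      then obtain w where w: "w \<in> words n" and C: "C = coset n K w" unfolding quot_flags_def by auto
      have z: "act adjX w x \<in> FX" using act_closed[OF X x w] .
      have "f (act adjX w x) = C" unfolding f_def C using r[OF z] w ceq by metis
      then show "C \<in> f ` FX" using z by blast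
    qed
  qed
  moreover have "\<forall>i<n. \<forall>z\<in>FX. f (adjX i z) = quot_adj n i (f z)"
  proof (intro allI impI ballI)
    fix i z assume i: "i < n" and z: "z \<in> FX"
    have az: "adjX i z \<in> FX" using X i z unfolding premaniplex_def by blast
    have iw: "i # r z \<in> words n" using r[OF z] i by (auto simp: words_def)
    have "act adjX (i # r z) x = adjX i z" using r[OF z] by simp
    then have "f (adjX i z) = coset n K (i # r z)" unfolding f_def using r[OF az] iw ceq by metis
    then show "f (adjX i z) = quot_adj n i (f z)" unfolding f_def using coset_adj[OF i _ K] r[OF z] by simp
  qed
  ultimately show ?thesis unfolding covers_def by blast
qed

theorem theorem5p7:
  fixes n m :: nat
    and FX :: "'a set" and adjX :: "nat \<Rightarrow> 'a \<Rightarrow> 'a" and x0 :: 'a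
    and FY :: "'b set" and adjY :: "nat \<Rightarrow> 'b \<Rightarrow> 'b" and y0 :: 'b
    and eta :: "'b \<Rightarrow> word \<Rightarrow> word"
    and L :: "word set" and \<zeta> :: "word \<Rightarrow> word"
  assumes X: "premaniplex n FX adjX" and Xconn: "connected_pm n FX adjX" and x0: "x0 \<in> FX"
    and Y: "voltage_operator n m FY adjY eta"
    and conv: "trivial_tree_convention n m FY adjY eta"
    and pres: "preserves_connectivity n m FY adjY eta"
    and y0: "y0 \<in> FY"
    and L_def: "L = stab m adjY y0"
    and zeta_def: "\<zeta> = eta y0"
    and nocover: "\<forall>\<upsilon>\<in>words m - L.
       \<not> covers n FX adjX
           (quot_flags n (\<zeta> ` {w \<in> L. \<upsilon> @ w @ rev \<upsilon> \<in> L}))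
           (quot_adj n)"
  shows "\<forall>\<gamma>. automorphism m (FX \<times> FY) (prod_adj adjX adjY eta) \<gamma> \<longrightarrow>
           (\<exists>\<alpha>. automorphism n FX adjX \<alpha> \<and>
              (\<forall>x\<in>FX. \<forall>y\<in>FY. \<gamma> (x, y) = (\<alpha> x, y)))"
proof (intro allI impI)
  fix \<gamma> assume aut: "automorphism m (FX \<times> FY) (prod_adj adjX adjY eta) \<gamma>"
  define P where "P = prod_adj adjX adjY eta"
  have Yp: "premaniplex m FY adjY" and V: "voltage n m FY adjY eta"
    using Y by (auto simp: voltage_operator_def)
  have etaw: "eta y \<omega> \<in> words n" if "y \<in> FY" "\<omega> \<in> words m" for y \<omega>
    using V that unfolding voltage_def by blast
  have U: "\<exists>\<omega>\<in>words m. act adjY \<omega> y0 = y \<and> cox_eq n (eta y0 \<omega>) w"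
    if "w \<in> words n" "y \<in> FY" for w y
    using universal[OF Yp V pres y0 that] .
  have A: "act P \<omega> (x,y) = (act adjX (eta y \<omega>) x, act adjY \<omega> y)"
    if "x \<in> FX" "y \<in> FY" "\<omega> \<in> words m" for x y \<omega>
    unfolding P_def using prod_act[OF X Yp V that(1,2) that(3)] .
  have Pcl: "\<forall>i<m. \<forall>p\<in>FX \<times> FY. P i p \<in> FX \<times> FY" unfolding P_def using prod_closed[OF X Yp V] .
  have autP: "automorphism m (FX \<times> FY) P \<gamma>" using aut P_def by simp
  have gcomm: "\<gamma> (act P \<omega> p) = act P \<omega> (\<gamma> p)" if "p \<in> FX \<times> FY" "\<omega> \<in> words m" for p \<omega>
    using aut_comm[OF Pcl autP that(1) that(2)] .
  have gin: "\<gamma> p \<in> FX \<times> FY" if "p \<in> FX \<times> FY" for p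
    using autP that unfolding automorphism_def bij_betw_def by blast
  have ginj: "inj_on \<gamma> (FX \<times> FY)" using autP unfolding automorphism_def bij_betw_def by blast
  have e: "[] \<in> words n" by (simp add: words_def)
  have Lw: "L \<subseteq> words m" unfolding L_def stab_def by blast
  have step1: "snd (\<gamma> (x, y0)) = y0" if x: "x \<in> FX" for x
  proof (rule ccontr)
    assume ne: "snd (\<gamma> (x, y0)) \<noteq> y0"
    obtain x' y1 where g: "\<gamma> (x, y0) = (x', y1)" and x': "x' \<in> FX" and y1: "y1 \<in> FY"
      using gin[of "(x,y0)"] x y0 by (cases "\<gamma> (x, y0)") auto
    obtain \<upsilon> where u: "\<upsilon> \<in> words m" and uy: "act adjY \<upsilon> y0 = y1" using U[OF e y1] by blast
    define u' where "u' = rev \<upsilon>"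
    have u'w: "u' \<in> words m" using u by (simp add: u'_def words_def)
    have ru': "rev u' = \<upsilon>" by (simp add: u'_def)
    have nL: "u' \<notin> L"
    proof
      assume "u' \<in> L"
      then have "act adjY (rev \<upsilon>) y0 = y0" unfolding L_def stab_def u'_def by simp
      then have "y1 = y0" using act_rev2[OF Yp y0 u] uy by simp
      then show False using ne g by simp
    qed
    define z' where "z' = act adjY \<upsilon> y0"
    have z': "z' \<in> FY" unfolding z'_def using act_closed[OF Yp y0 u] .
    have condiff: "(u' @ w @ rev u' \<in> L) \<longleftrightarrow> act adjY w z' = z'" if w: "w \<in> words m" for w
    proof -
      have "u' @ w @ rev u' \<in> words m" using w u u'w by (auto simp: words_def ru')
      then have "(u' @ w @ rev u' \<in> L) \<longleftrightarrow> act adjY u' (act adjY w z') = y0"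
        unfolding L_def stab_def z'_def ru' by (simp add: act_append)
      also have "\<dots> \<longleftrightarrow> act adjY w z' = z'"
      proof
        assume "act adjY u' (act adjY w z') = y0"
        then have "act adjY \<upsilon> (act adjY u' (act adjY w z')) = z'" unfolding z'_def by simp
        then show "act adjY w z' = z'" using act_rev2[OF Yp _ u, of "act adjY w z'"]
          act_closed[OF Yp z' w] by (simp add: u'_def)
      next
        assume "act adjY w z' = z'"
        then show "act adjY u' (act adjY w z') = y0" unfolding z'_def u'_def
          using act_rev[OF Yp y0 u] by simp
      qed
      finally show ?thesis .
    qed
    define K where "K = \<zeta> ` {w \<in> L. u' @ w @ rev u' \<in> L}"
    have "covers n FX adjX (quot_flags n K) (quot_adj n)"
    proof (rule cover_lemma[OF X Xconn x])
      show "K \<subseteq> words n" unfolding K_def zeta_def using Lw etaw y0 by blast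
    next
      show "\<forall>a\<in>K. \<forall>b\<in>K. \<exists>c\<in>K. cox_eq n (a @ b) c"
      proof (intro ballI)
        fix a b assume "a \<in> K" "b \<in> K"
        then obtain l1 l2 where l1: "l1 \<in> L" "u' @ l1 @ rev u' \<in> L" and a: "a = \<zeta> l1"
          and l2: "l2 \<in> L" "u' @ l2 @ rev u' \<in> L" and b: "b = \<zeta> l2" unfolding K_def by blast
        have l1w: "l1 \<in> words m" and l2w: "l2 \<in> words m" using l1 l2 Lw by auto
        have l12: "l1 @ l2 \<in> words m" using l1w l2w by (auto simp: words_def)
        have "act adjY (l1 @ l2) y0 = y0" using l1 l2 unfolding L_def stab_def by (simp add: act_append)
        then have L12: "l1 @ l2 \<in> L" using l12 unfolding L_def stab_def by simp
        have "act adjY (l1 @ l2) z' = z'" using condiff[OF l1w] condiff[OF l2w] l1 l2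
          by (simp add: act_append)
        then have L12': "u' @ (l1 @ l2) @ rev u' \<in> L" using condiff[OF l12] by simp
        have "\<forall>y\<in>FY. \<forall>\<omega>\<in>words m. \<forall>\<omega>'\<in>words m.
            cox_eq n (eta y (\<omega>' @ \<omega>)) (eta (act adjY \<omega> y) \<omega>' @ eta y \<omega>)"
          using V unfolding voltage_def by blast
        then have "cox_eq n (eta y0 (l1 @ l2)) (eta (act adjY l2 y0) l1 @ eta y0 l2)"
          using y0 l1w l2w by blast
        moreover have "act adjY l2 y0 = y0" using l2 unfolding L_def stab_def by simp
        ultimately have "cox_eq n (a @ b) (\<zeta> (l1 @ l2))" unfolding a b zeta_def
          by (simp add: cox_eq.cox_sym)
        moreover have "\<zeta> (l1 @ l2) \<in> K" unfolding K_def using L12 L12' by blast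
        ultimately show "\<exists>c\<in>K. cox_eq n (a @ b) c" by blast
      qed
    next
      show "\<forall>s\<in>words n. act adjX s x = x \<longrightarrow> (\<exists>k\<in>K. cox_eq n s k)"
      proof (intro ballI impI)
        fix s assume s: "s \<in> words n" and sx: "act adjX s x = x"
        obtain lam where lw: "lam \<in> words m" and ly: "act adjY lam y0 = y0" and ls: "cox_eq n (eta y0 lam) s"
          using U[OF s y0] by blast
        have lL: "lam \<in> L" using lw ly unfolding L_def stab_def by simp
        have "act P lam (x, y0) = (x, y0)" using A[OF x y0 lw] act_cox[OF ls X x] sx ly by simp
        then have "act P lam (x', y1) = (x', y1)" using gcomm[of "(x,y0)" lam] x y0 lw g by simp
        then have "act adjY lam y1 = y1" using A[OF x' y1 lw] by simp
        then have "u' @ lam @ rev u' \<in> L" using condiff[OF lw] uy z'_def by simp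
        then have "\<zeta> lam \<in> K" unfolding K_def using lL by blast
        then show "\<exists>k\<in>K. cox_eq n s k" using ls zeta_def by (blast intro: cox_eq.cox_sym)
      qed
    qed
    then show False using nocover nL u'w unfolding K_def by blast
  qed
  define \<alpha> where "\<alpha> x = fst (\<gamma> (x, y0))" for x
  have gx: "\<gamma> (x, y0) = (\<alpha> x, y0)" if "x \<in> FX" for x
    using step1[OF that] unfolding \<alpha>_def by (metis prod.collapse)
  have aF: "\<alpha> x \<in> FX" if "x \<in> FX" for x using gin[of "(x,y0)"] that y0 gx by auto
  have acomm: "\<alpha> (act adjX w x) = act adjX w (\<alpha> x)" if x: "x \<in> FX" and w: "w \<in> words n" for x w
  proof -
    obtain lam where lw: "lam \<in> words m" and ly: "act adjY lam y0 = y0" and ls: "cox_eq n (eta y0 lam) w"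
      using U[OF w y0] by blast
    have 1: "act P lam (x, y0) = (act adjX w x, y0)" using A[OF x y0 lw] act_cox[OF ls X x] ly by simp
    have 2: "act P lam (\<alpha> x, y0) = (act adjX w (\<alpha> x), y0)"
      using A[OF aF[OF x] y0 lw] act_cox[OF ls X aF[OF x]] ly by simp
    have "\<gamma> (act adjX w x, y0) = (act adjX w (\<alpha> x), y0)"
      using gcomm[of "(x,y0)" lam] x y0 lw 1 2 gx[OF x] by simp
    moreover have "act adjX w x \<in> FX" using act_closed[OF X x w] .
    ultimately show ?thesis using gx by simp
  qed
  have autA: "automorphism n FX adjX \<alpha>"
    unfolding automorphism_def
  proof (intro conjI allI impI ballI)
    show "bij_betw \<alpha> FX FX"
      unfolding bij_betw_def
    proof (intro conjI)
      show "inj_on \<alpha> FX"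
      proof (rule inj_onI)
        fix a b assume a: "a \<in> FX" and b: "b \<in> FX" and ab: "\<alpha> a = \<alpha> b"
        then have "\<gamma> (a, y0) = \<gamma> (b, y0)" using gx by simp
        then show "a = b" using inj_onD[OF ginj] a b y0 by blast
      qed
      show "\<alpha> ` FX = FX"
      proof
        show "\<alpha> ` FX \<subseteq> FX" using aF by blast
        show "FX \<subseteq> \<alpha> ` FX"
        proof
          fix z assume z: "z \<in> FX"
          obtain w where w: "w \<in> words n" and wz: "act adjX w (\<alpha> x0) = z"
            using Xconn aF[OF x0] z unfolding connected_pm_def by blast
          have "\<alpha> (act adjX w x0) = z" using acomm[OF x0 w] wz by simp
          then show "z \<in> \<alpha> ` FX" using act_closed[OF X x0 w] by blast
        qed
      qed
    qed
  next
    fix i x assume i: "i < n" and x: "x \<in> FX"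
    have "[i] \<in> words n" using i by (simp add: words_def)
    from acomm[OF x this] show "\<alpha> (adjX i x) = adjX i (\<alpha> x)" by simp
  qed
  have final: "\<gamma> (x, y) = (\<alpha> x, y)" if x: "x \<in> FX" and y: "y \<in> FY" for x y
  proof -
    obtain \<upsilon> where u: "\<upsilon> \<in> words m" and uy: "act adjY \<upsilon> y0 = y" using U[OF e y] by blast
    define g where "g = eta y0 \<upsilon>"
    have gw: "g \<in> words n" unfolding g_def using etaw[OF y0 u] .
    have rgw: "rev g \<in> words n" using gw by (simp add: words_def)
    define x'' where "x'' = act adjX (rev g) x"
    have x'': "x'' \<in> FX" unfolding x''_def using act_closed[OF X x rgw] .
    have "act P \<upsilon> (x'', y0) = (x, y)" using A[OF x'' y0 u] uy act_rev2[OF X x gw]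
      unfolding g_def x''_def by simp
    then have "\<gamma> (x, y) = act P \<upsilon> (\<alpha> x'', y0)" using gcomm[of "(x'',y0)" \<upsilon>] x'' y0 u gx[OF x''] by simp
    also have "\<dots> = (act adjX g (\<alpha> x''), y)" using A[OF aF[OF x''] y0 u] uy g_def by simp
    also have "\<dots> = (\<alpha> x, y)" using acomm[OF x'' gw] act_rev2[OF X x gw] x''_def by simp
    finally show ?thesis .
  qed
  show "\<exists>\<alpha>. automorphism n FX adjX \<alpha> \<and> (\<forall>x\<in>FX. \<forall>y\<in>FY. \<gamma> (x, y) = (\<alpha> x, y))"
    using autA final by blast
qed

end
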